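(* Let $\alpha>-1$, $0\le\gamma<2+\alpha$ and $1<p\le q<\infty$. Let $\omega$ be a weight and $\mu$ a positive Borel measure on $\mathcal H$ such that for some $r>1$ and some $C>0$, for every interval $I\subset\mathbb R$, $$|Q_I|_\alpha^{q(\frac{\gamma}{2+\alpha}-\frac1p)}\left(\frac1{|Q_I|_\alpha}\int_{Q_I}\omega^{-p'r}dV_\alpha\right)^{\frac{q}{p'r}}\mu(Q_I)\le C.$$ Then there is $K>0$ such that for every $f\in L^p(\mathcal H,\omega dV_\alpha)$, $$\left(\int_{\mathcal H}(\mathcal M_{\alpha,\gamma}f)^qd\mu\right)^{1/q}\le K\|f\omega\|_{p,\alpha}.$$
   Context: $\mathcal H=\{x+iy:x\in\mathbb R,\ y>0\}$; for $\alpha>-1$, $dV_\alpha(x+iy)=y^\alpha dx\,dy$; $\|g\|_{p,\alpha}=(\int_{\mathcal H}|g|^pdV_\alpha)^{1/p}$; $p'$ is the conjugate exponent. A weight is a nonnegative locally integrable function. For an interval $I$, $Q_I=\{x+iy:x\in I,0<y<|I|\}$, $|Q_I|_\alpha=\int_{Q_I}dV_\alpha$. $\mathcal M_{\alpha,\gamma}f(z)=\sup\{|I|^{-(2+\alpha-\gamma)}\int_{Q_I}|f|dV_\alpha: I\subset\mathbb R\text{ interval}, z\in Q_I\}$. *)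

theory Defs
  imports "HOL-Analysis.Analysis"
begin

definition H :: "complex set" where
  "H = {z. Im z > 0}"

definition dV :: "real \<Rightarrow> complex measure" where
  "dV \<alpha> = density lborel (\<lambda>z. indicator H z * ennreal (Im z powr \<alpha>))"

definition real_interval :: "real set \<Rightarrow> bool" where
  "real_interval I \<longleftrightarrow> is_interval I \<and> bounded I \<and> I \<noteq> {} \<and> Inf I < Sup I"

definition ilen :: "real set \<Rightarrow> real" where
  "ilen I = Sup I - Inf I"

definition Qbox :: "real set \<Rightarrow> complex set" where
  "Qbox I = {z. Re z \<in> I \<and> 0 < Im z \<and> Im z < ilen I}"

text \<open>Real powers of extended nonnegative reals (for positive exponents):
  infinity stays infinity.\<close>
definition epowr :: "ennreal \<Rightarrow> real \<Rightarrow> ennreal" where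
  "epowr x a = (if x = \<infinity> then \<infinity> else ennreal (enn2real x powr a))"

definition Mag :: "real \<Rightarrow> real \<Rightarrow> (complex \<Rightarrow> complex) \<Rightarrow> complex \<Rightarrow> ennreal" where
  "Mag \<alpha> \<gamma> f z = (SUP I\<in>{I. real_interval I \<and> z \<in> Qbox I}.
      ennreal (ilen I powr (-(2 + \<alpha> - \<gamma>))) *
      (\<integral>\<^sup>+ w. indicator (Qbox I) w * ennreal (norm (f w)) \<partial>dV \<alpha>))"

definition negpow :: "real \<Rightarrow> real \<Rightarrow> ennreal" where
  "negpow s x = (if x = 0 then \<infinity> else ennreal (x powr (-s)))"

end

theory Submission
  imports Defs
begin

lemma epowr_top[simp]: "epowr \<infinity> a = \<infinity>"
  by (simp add: epowr_def)

lemma epowr_top'[simp]: "epowr top a = top"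
  by (simp add: epowr_def)

lemma epowr_ennreal: "c \<ge> 0 \<Longrightarrow> epowr (ennreal c) a = ennreal (c powr a)"
  by (simp add: epowr_def)

lemma epowr_0[simp]: "epowr 0 a = 0"
  by (simp add: epowr_def)

lemma epowr_1[simp]: "epowr x 1 = x"
  by (cases x) (auto simp: epowr_def)

lemma epowr_mono: assumes "a > 0" "x \<le> y" shows "epowr x a \<le> epowr y a"
proof (cases "y = \<infinity>")
  case False
  then have "x \<noteq> \<infinity>" using assms(2) by (auto simp: top_unique)
  then show ?thesis using False assms
    by (auto simp: epowr_def top.not_eq_extremum intro!: ennreal_leI powr_mono2 enn2real_mono)
qed (simp add: epowr_def)

lemma epowr_epowr: assumes "a > 0" "b > 0" shows "epowr (epowr x a) b = epowr x (a * b)"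
  using assms by (cases x) (auto simp: epowr_def powr_powr)

lemma epowr_pos: assumes "x > 0" shows "epowr x a > 0"
  using assms by (cases x) (auto simp: epowr_def)

lemma epowr_mult: assumes "a > 0" shows "epowr (x * y) a = epowr x a * epowr y a"
proof (cases "x = \<infinity> \<or> y = \<infinity>")
  case True
  then show ?thesis
  proof
    assume x: "x = \<infinity>"
    show ?thesis
    proof (cases "y = 0")
      case True then show ?thesis using assms x by simp
    next
      case False
      then have "epowr y a > 0" using epowr_pos[of y a] by (simp add: zero_less_iff_neq_zero)
      then show ?thesis using x False by (simp add: epowr_def ennreal_top_mult)
    qed
  next
    assume y: "y = \<infinity>"
    show ?thesis
    proof (cases "x = 0")
      case True then show ?thesis using assms y by simp
    next
      case False
      then have "epowr x a > 0" using epowr_pos[of x a] by (simp add: zero_less_iff_neq_zero)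
      then show ?thesis using y False by (simp add: epowr_def ennreal_mult_top)
    qed
  qed
next
  case False
  then obtain u v where "x = ennreal u" "y = ennreal v" "u \<ge> 0" "v \<ge> 0"
    by (cases x; cases y) auto
  then show ?thesis using assms
    by (simp add: epowr_def ennreal_mult[symmetric] powr_mult)
qed

lemma epowr_cmult: assumes "a > 0" "c \<ge> 0" shows "epowr (ennreal c * y) a = ennreal (c powr a) * epowr y a"
  using epowr_mult[OF assms(1)] epowr_ennreal[OF assms(2)] by simp

lemma epowr_le_imp: assumes "q > 0" "epowr x q \<le> T" shows "x \<le> epowr T (1/q)"
proof -
  have "x = epowr (epowr x q) (1/q)" using assms by (simp add: epowr_epowr)
  also have "\<dots> \<le> epowr T (1/q)" using assms by (intro epowr_mono) auto
  finally show ?thesis .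
qed

lemma young_scaled:
  fixes a b x y p q :: real
  assumes p: "p > 1" and q: "q > 1" and pq: "1/p + 1/q = 1"
    and a: "a > 0" and b: "b > 0" and x: "x \<ge> 0" and y: "y \<ge> 0"
  shows "x * y \<le> a powr (1/p) * b powr (1/q) * (x powr p / (p*a) + y powr q / (q*b))"
proof -
  define X where "X = x / a powr (1/p)"
  define Y where "Y = y / b powr (1/q)"
  have ka: "a powr (1/p) > 0" and kb: "b powr (1/q) > 0" using a b by auto
  have "X \<ge> 0" "Y \<ge> 0" using x y ka kb by (auto simp: X_def Y_def)
  then have "X * Y \<le> X powr p / p + Y powr q / q"
    using Youngs_inequality[OF p q pq] by blast
  moreover have "X powr p = x powr p / a"
    using x a p by (simp add: X_def powr_divide powr_powr)
  moreover have "Y powr q = y powr q / b"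
    using y b q by (simp add: Y_def powr_divide powr_powr)
  ultimately have "X * Y \<le> x powr p / (p*a) + y powr q / (q*b)" by (simp add: field_simps)
  then have "a powr (1/p) * b powr (1/q) * (X * Y) \<le> a powr (1/p) * b powr (1/q) * (x powr p / (p*a) + y powr q / (q*b))"
    using ka kb by (intro mult_left_mono) auto
  moreover have "a powr (1/p) * b powr (1/q) * (X * Y) = x * y"
    using ka kb by (simp add: X_def Y_def field_simps)
  ultimately show ?thesis by simp
qed

lemma holder2:
  fixes F G :: "'a \<Rightarrow> real"
  assumes p: "p > 1" and q: "q > 1" and pq: "1/p + 1/q = 1"
    and Fm[measurable]: "F \<in> borel_measurable M" and Gm[measurable]: "G \<in> borel_measurable M"
    and nnF: "\<And>x. F x \<ge> 0" and nnG: "\<And>x. G x \<ge> 0"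
  shows "(\<integral>\<^sup>+x. ennreal (F x * G x) \<partial>M) \<le>
     epowr (\<integral>\<^sup>+x. ennreal (F x powr p) \<partial>M) (1/p) * epowr (\<integral>\<^sup>+x. ennreal (G x powr q) \<partial>M) (1/q)"
proof -
  define A where "A = (\<integral>\<^sup>+x. ennreal (F x powr p) \<partial>M)"
  define B where "B = (\<integral>\<^sup>+x. ennreal (G x powr q) \<partial>M)"
  have ppos: "1/p > 0" "1/q > 0" using p q by auto
  consider "A = 0" | "B = 0" | "A \<noteq> 0" "B \<noteq> 0" "A = \<infinity> \<or> B = \<infinity>" | "A \<noteq> 0" "B \<noteq> 0" "A \<noteq> \<infinity>" "B \<noteq> \<infinity>"
    by blast
  then show ?thesis
  proof cases
    case 1
    then have "AE x in M. ennreal (F x powr p) = 0"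
      unfolding A_def by (subst (asm) nn_integral_0_iff_AE) auto
    then have "AE x in M. ennreal (F x * G x) = 0"
      by eventually_elim (use nnF in auto)
    then have "(\<integral>\<^sup>+x. ennreal (F x * G x) \<partial>M) = 0"
      by (simp add: nn_integral_0_iff_AE)
    then show ?thesis by simp
  next
    case 2
    then have "AE x in M. ennreal (G x powr q) = 0"
      unfolding B_def by (subst (asm) nn_integral_0_iff_AE) auto
    then have "AE x in M. ennreal (F x * G x) = 0"
      by eventually_elim (use nnG in auto)
    then have "(\<integral>\<^sup>+x. ennreal (F x * G x) \<partial>M) = 0"
      by (simp add: nn_integral_0_iff_AE)
    then show ?thesis by simp
  next
    case 3
    have "epowr A (1/p) > 0" "epowr B (1/q) > 0"
      using 3 epowr_pos[of A] epowr_pos[of B] by (auto simp: zero_less_iff_neq_zero)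
    moreover have "epowr A (1/p) = \<infinity> \<or> epowr B (1/q) = \<infinity>" using 3 by auto
    ultimately have "epowr A (1/p) * epowr B (1/q) = \<infinity>"
      by (auto simp: ennreal_mult_eq_top_iff)
    then show ?thesis unfolding A_def B_def by simp
  next
    case 4
    define a where "a = enn2real A"
    define b where "b = enn2real B"
    have Aa: "A = ennreal a" and Bb: "B = ennreal b" using 4 by (auto simp: a_def b_def top.not_eq_extremum)
    have "a \<ge> 0" "b \<ge> 0" by (simp_all add: a_def b_def)
    moreover have "a \<noteq> 0" "b \<noteq> 0" using 4 Aa Bb by auto
    ultimately have a: "a > 0" and b: "b > 0" by auto
    define k where "k = a powr (1/p) * b powr (1/q)"
    have k: "k \<ge> 0" by (simp add: k_def)
    have "(\<integral>\<^sup>+x. ennreal (F x * G x) \<partial>M) \<le>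
          (\<integral>\<^sup>+x. ennreal k * (ennreal (1/(p*a)) * ennreal (F x powr p) + ennreal (1/(q*b)) * ennreal (G x powr q)) \<partial>M)"
    proof (intro nn_integral_mono)
      fix x
      have "F x * G x \<le> k * (1/(p*a) * F x powr p + 1/(q*b) * G x powr q)"
        using young_scaled[OF p q pq a b nnF[of x] nnG[of x]] by (simp add: k_def)
      then show "ennreal (F x * G x) \<le> ennreal k * (ennreal (1/(p*a)) * ennreal (F x powr p) + ennreal (1/(q*b)) * ennreal (G x powr q))"
        using p q a b k by (simp add: ennreal_mult[symmetric] ennreal_plus[symmetric] del: ennreal_plus)
    qed
    also have "\<dots> = ennreal k * (ennreal (1/(p*a)) * A + ennreal (1/(q*b)) * B)"
      unfolding A_def B_def
      by (simp add: nn_integral_cmult nn_integral_add)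
    also have "\<dots> = ennreal k * ennreal (1/(p*a) * a + 1/(q*b) * b)"
      using a b p q by (simp add: Aa Bb ennreal_mult[symmetric] ennreal_plus[symmetric] del: ennreal_plus)
    also have "1/(p*a) * a + 1/(q*b) * b = 1" using a b pq by simp
    also have "ennreal k * ennreal 1 = epowr A (1/p) * epowr B (1/q)"
      using a b by (simp add: Aa Bb epowr_ennreal k_def ennreal_mult[symmetric])
    finally show ?thesis unfolding A_def B_def .
  qed
qed

lemma holder3:
  fixes F G H :: "'a \<Rightarrow> real"
  assumes p: "p > 1" and s: "s > 1" and u: "u > 1" and psu: "1/p + 1/s + 1/u = 1"
    and [measurable]: "F \<in> borel_measurable M" "G \<in> borel_measurable M" "H \<in> borel_measurable M"
    and nnF: "\<And>x. F x \<ge> 0" and nnG: "\<And>x. G x \<ge> 0" and nnH: "\<And>x. H x \<ge> 0"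
  shows "(\<integral>\<^sup>+x. ennreal (F x * G x * H x) \<partial>M) \<le>
     epowr (\<integral>\<^sup>+x. ennreal (F x powr p) \<partial>M) (1/p) * epowr (\<integral>\<^sup>+x. ennreal (G x powr s) \<partial>M) (1/s)
     * epowr (\<integral>\<^sup>+x. ennreal (H x powr u) \<partial>M) (1/u)"
proof -
  define p' where "p' = p / (p - 1)"
  have ip': "1/p' = 1/s + 1/u" using p psu by (simp add: p'_def field_simps)
  have p'1: "p' > 1" using p by (simp add: p'_def field_simps)
  have pp': "1/p + 1/p' = 1" using ip' psu by simp
  have sp: "s/p' > 1"
  proof -
    have "1/s < 1/p'" using ip' u by simp
    then show ?thesis using s p'1 by (simp add: field_simps)
  qed
  have up: "u/p' > 1"
  proof -
    have "1/u < 1/p'" using ip' s by simp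
    then show ?thesis using u p'1 by (simp add: field_simps)
  qed
  have spu: "1/(s/p') + 1/(u/p') = 1" using ip' p'1 by (simp add: field_simps)
  define AG where "AG = (\<integral>\<^sup>+x. ennreal (G x powr s) \<partial>M)"
  define AH where "AH = (\<integral>\<^sup>+x. ennreal (H x powr u) \<partial>M)"
  have h1: "(\<integral>\<^sup>+x. ennreal (F x * (G x * H x)) \<partial>M) \<le> epowr (\<integral>\<^sup>+x. ennreal (F x powr p) \<partial>M) (1/p) *
      epowr (\<integral>\<^sup>+x. ennreal ((G x * H x) powr p') \<partial>M) (1/p')"
    by (rule holder2[OF p p'1 pp']) (auto intro: nnF nnG nnH mult_nonneg_nonneg)
  have "(\<integral>\<^sup>+x. ennreal ((G x * H x) powr p') \<partial>M) = (\<integral>\<^sup>+x. ennreal (G x powr p' * H x powr p') \<partial>M)"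
    using nnG nnH by (simp add: powr_mult)
  also have "\<dots> \<le> epowr (\<integral>\<^sup>+x. ennreal ((G x powr p') powr (s/p')) \<partial>M) (1/(s/p')) *
      epowr (\<integral>\<^sup>+x. ennreal ((H x powr p') powr (u/p')) \<partial>M) (1/(u/p'))"
    by (rule holder2[OF sp up spu]) auto
  also have "(\<lambda>x. (G x powr p') powr (s/p')) = (\<lambda>x. G x powr s)"
    using p'1 by (simp add: powr_powr)
  also have "(\<lambda>x. (H x powr p') powr (u/p')) = (\<lambda>x. H x powr u)"
    using p'1 by (simp add: powr_powr)
  finally have h2: "(\<integral>\<^sup>+x. ennreal ((G x * H x) powr p') \<partial>M) \<le> epowr AG (1/(s/p')) * epowr AH (1/(u/p'))"
    by (simp add: AG_def AH_def)
  have h3: "epowr (\<integral>\<^sup>+x. ennreal ((G x * H x) powr p') \<partial>M) (1/p') \<le> epowr (epowr AG (1/(s/p')) * epowr AH (1/(u/p'))) (1/p')"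
    by (rule epowr_mono[OF _ h2]) (use p'1 in simp)
  have "(\<integral>\<^sup>+x. ennreal (F x * G x * H x) \<partial>M) = (\<integral>\<^sup>+x. ennreal (F x * (G x * H x)) \<partial>M)"
    by (simp add: mult.assoc)
  also have "\<dots> \<le> epowr (\<integral>\<^sup>+x. ennreal (F x powr p) \<partial>M) (1/p) * epowr (epowr AG (1/(s/p')) * epowr AH (1/(u/p'))) (1/p')"
    using h1 h3 by (meson mult_left_mono order_trans zero_le)
  also have "epowr (epowr AG (1/(s/p')) * epowr AH (1/(u/p'))) (1/p')
     = epowr AG (1/s) * epowr AH (1/u)"
    using p'1 s u by (simp add: epowr_mult epowr_epowr)
  finally show ?thesis by (simp add: mult.assoc AG_def AH_def)
qed

lemma ilen_Icc: "a < b \<Longrightarrow> ilen {a..b} = b - a"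
  by (simp add: ilen_def)

lemma Qbox_Icc: "L > 0 \<Longrightarrow> Qbox {a..a+L} = {z. a \<le> Re z \<and> Re z \<le> a + L \<and> 0 < Im z \<and> Im z < L}"
  by (auto simp: Qbox_def ilen_Icc)

lemma Qbox_sets[measurable]: "Qbox {a..b} \<in> sets borel"
  unfolding Qbox_def by measurable

lemma H_sets[measurable]: "H \<in> sets borel"
  unfolding H_def by measurable

lemma Qbox_sub_H: "Qbox I \<subseteq> H"
  by (auto simp: Qbox_def H_def)

lemma powr_integral_0L:
  assumes L: "L > 0" and c: "c > -1"
  shows "(\<integral>\<^sup>+y. ennreal (indicator {0<..<L} y * y powr c) \<partial>lborel) = ennreal (L powr (c+1) / (c+1))"
proof -
  have "((\<lambda>x. x powr c) has_integral (L powr (c+1) / (c+1))) {0..L}"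
    using has_integral_powr_from_0[OF c] L by simp
  then have "((\<lambda>x. if x \<in> {0..L} then x powr c else 0) has_integral (L powr (c+1) / (c+1))) UNIV"
    by (rule has_integral_restrict_UNIV[THEN iffD2])
  note h = this
  have *: "((\<lambda>x. indicator {0<..<L} x * x powr c) has_integral (L powr (c+1) / (c+1))) UNIV"
    by (rule has_integral_spike_finite[of "{0, L}", OF _ _ h]) (auto simp: indicator_def less_le)
  show ?thesis
    by (rule nn_integral_has_integral_lborel[OF _ _ *]) (auto simp: indicator_def)
qed

lemma box_integral:
  assumes L: "L > 0" and a: "\<alpha> > -1" and ab: "\<alpha> + \<beta> > -1"
  shows "(\<integral>\<^sup>+z. indicator (Qbox {a..a+L}) z * ennreal (Im z powr \<beta>) \<partial>dV \<alpha>)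
     = ennreal (L * (L powr (\<alpha>+\<beta>+1) / (\<alpha>+\<beta>+1)))"
proof -
  define g where "g = (\<lambda>b::complex. if b = 1 then (\<lambda>x. indicator {a..a+L} x :: ennreal)
     else (\<lambda>y. ennreal (indicator {0<..<L} y * y powr (\<alpha>+\<beta>))))"
  have "(\<integral>\<^sup>+z. indicator (Qbox {a..a+L}) z * ennreal (Im z powr \<beta>) \<partial>dV \<alpha>)
     = (\<integral>\<^sup>+z. indicator H z * ennreal (Im z powr \<alpha>) * (indicator (Qbox {a..a+L}) z * ennreal (Im z powr \<beta>)) \<partial>lborel)"
    unfolding dV_def by (subst nn_integral_density) auto
  also have "\<dots> = (\<integral>\<^sup>+z. (\<Prod>b\<in>Basis. g b (z \<bullet> b)) \<partial>lborel)"
  proof (intro nn_integral_cong)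
    fix z :: complex
    have "(\<Prod>b\<in>Basis. g b (z \<bullet> b)) = g 1 (Re z) * g \<i> (Im z)"
      by (simp add: Basis_complex_def inner_complex_def)
    also have "\<dots> = indicator H z * ennreal (Im z powr \<alpha>) * (indicator (Qbox {a..a+L}) z * ennreal (Im z powr \<beta>))"
      using L by (auto simp: g_def Qbox_Icc H_def indicator_def powr_add ennreal_mult)
    finally show "indicator H z * ennreal (Im z powr \<alpha>) * (indicator (Qbox {a..a+L}) z * ennreal (Im z powr \<beta>)) = (\<Prod>b\<in>Basis. g b (z \<bullet> b))"
      by simp
  qed
  also have "\<dots> = (\<Prod>b\<in>Basis. (\<integral>\<^sup>+x. g b x \<partial>lborel))"
    by (rule nn_integral_lborel_prod) (auto simp: g_def)
  also have "\<dots> = (\<integral>\<^sup>+x. g 1 x \<partial>lborel) * (\<integral>\<^sup>+x. g \<i> x \<partial>lborel)"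
    by (simp add: Basis_complex_def)
  also have "\<dots> = ennreal L * ennreal (L powr (\<alpha>+\<beta>+1) / (\<alpha>+\<beta>+1))"
    using L ab powr_integral_0L[OF L, of "\<alpha>+\<beta>"] by (simp add: g_def)
  also have "\<dots> = ennreal (L * (L powr (\<alpha>+\<beta>+1) / (\<alpha>+\<beta>+1)))"
    using L ab by (subst ennreal_mult[symmetric]) auto
  finally show ?thesis .
qed

lemma box_measure:
  assumes L: "L > 0" and a: "\<alpha> > -1"
  shows "emeasure (dV \<alpha>) (Qbox {a..a+L}) = ennreal (L powr (2+\<alpha>) / (1+\<alpha>))"
    and "measure (dV \<alpha>) (Qbox {a..a+L}) = L powr (2+\<alpha>) / (1+\<alpha>)"
proof -
  have "emeasure (dV \<alpha>) (Qbox {a..a+L}) = (\<integral>\<^sup>+z. indicator (Qbox {a..a+L}) z \<partial>dV \<alpha>)"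
    by (subst nn_integral_indicator) (auto simp: dV_def)
  also have "\<dots> = (\<integral>\<^sup>+z. indicator (Qbox {a..a+L}) z * ennreal (Im z powr 0) \<partial>dV \<alpha>)"
    by (rule nn_integral_cong) (auto simp: Qbox_Icc[OF L] indicator_def)
  also have "\<dots> = ennreal (L * (L powr (\<alpha>+0+1) / (\<alpha>+0+1)))"
    using box_integral[OF L a, of 0] a by simp
  also have "L * (L powr (\<alpha>+0+1) / (\<alpha>+0+1)) = L powr (2+\<alpha>) / (1+\<alpha>)"
    using L by (simp add: powr_add add_ac power2_eq_square)
  finally show *: "emeasure (dV \<alpha>) (Qbox {a..a+L}) = ennreal (L powr (2+\<alpha>) / (1+\<alpha>))" .
  show "measure (dV \<alpha>) (Qbox {a..a+L}) = L powr (2+\<alpha>) / (1+\<alpha>)"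
    unfolding measure_def * using a by simp
qed

lemma const_id:
  fixes L \<alpha> \<delta> u q s e \<kappa> C :: real
  assumes L: "L > 0" and a: "1 + \<alpha> > 0" and d: "1 + \<alpha> - \<delta>*u > 0"
    and ex: "-\<kappa>*q + \<delta>*q + (2+\<alpha>-\<delta>*u)*(q/u) + (2+\<alpha>)*(q/s - e) = 0"
  shows "L powr (-\<kappa>*q) * L powr (\<delta>*q) * (L * (L powr (\<alpha> + - (\<delta>*u) + 1) / (\<alpha> + - (\<delta>*u) + 1))) powr (q/u)
     * (C * (L powr (2+\<alpha>) / (1+\<alpha>)) powr (q/s - e))
     = C * (1 / (1+\<alpha>-\<delta>*u) powr (q/u)) * (1 / (1+\<alpha>) powr (q/s - e))"
proof -
  have d': "\<alpha> + - (\<delta>*u) + 1 > 0" using d by simp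
  have 1: "L * (L powr (\<alpha> + - (\<delta>*u) + 1) / (\<alpha> + - (\<delta>*u) + 1)) = L powr (2+\<alpha>-\<delta>*u) / (1+\<alpha>-\<delta>*u)"
  proof -
    have "L * L powr (\<alpha> + - (\<delta>*u) + 1) = L powr (1 + (\<alpha> + - (\<delta>*u) + 1))"
      using L by (intro powr_mult_base) simp
    then show ?thesis by (simp add: algebra_simps)
  qed
  have 2: "(L powr (2+\<alpha>-\<delta>*u) / (1+\<alpha>-\<delta>*u)) powr (q/u) = L powr ((2+\<alpha>-\<delta>*u)*(q/u)) / (1+\<alpha>-\<delta>*u) powr (q/u)"
    using L d by (simp add: powr_divide powr_powr)
  have 3: "(L powr (2+\<alpha>) / (1+\<alpha>)) powr (q/s - e) = L powr ((2+\<alpha>)*(q/s - e)) / (1+\<alpha>) powr (q/s - e)"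
    using L a by (simp add: powr_divide powr_powr)
  have 4: "L powr (-\<kappa>*q) * L powr (\<delta>*q) * L powr ((2+\<alpha>-\<delta>*u)*(q/u)) * L powr ((2+\<alpha>)*(q/s - e)) = 1"
    using L ex by (simp add: powr_add[symmetric])
  show ?thesis
    unfolding 1 2 3 using 4
    by (simp add: field_simps)
qed

lemma negpow_meas[measurable]: "(\<lambda>x. negpow s (g x)) \<in> borel_measurable M" if [measurable]: "g \<in> borel_measurable M"
  unfolding negpow_def by measurable

lemma sets_dV[measurable_cong]: "sets (dV \<alpha>) = sets borel"
  by (simp add: dV_def)

lemma space_dV[simp]: "space (dV \<alpha>) = UNIV"
  by (simp add: dV_def)

lemma stepC:
  fixes f :: "complex \<Rightarrow> complex" and \<omega> :: "complex \<Rightarrow> real" and \<mu> :: "complex measure"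
  assumes a: "\<alpha> > -1" and p: "p > 1" and s: "s > 1" and u: "u > 1" and psu: "1/p + 1/s + 1/u = 1"
    and \<delta>: "\<delta> > 0" and \<delta>u: "1 + \<alpha> - \<delta>*u > 0" and q: "q > 0" and L: "L > 0" and C: "C \<ge> 0"
    and wm[measurable]: "\<omega> \<in> borel_measurable borel" and fm[measurable]: "f \<in> borel_measurable borel"
    and wnn: "\<forall>z\<in>H. \<omega> z \<ge> 0"
    and ex: "-\<kappa>*q + \<delta>*q + (2+\<alpha>-\<delta>*u)*(q/u) + (2+\<alpha>)*(q/s - e) = 0"
    and cnd: "ennreal (measure (dV \<alpha>) (Qbox {x..x+L}) powr e) *
        epowr ((\<integral>\<^sup>+z. indicator (Qbox {x..x+L}) z * negpow s (\<omega> z) \<partial>dV \<alpha>)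
                 / ennreal (measure (dV \<alpha>) (Qbox {x..x+L}))) (q/s) *
        emeasure \<mu> (Qbox {x..x+L}) \<le> ennreal C"
  shows "epowr (ennreal (L powr (-\<kappa>)) * (\<integral>\<^sup>+z. indicator (Qbox {x..x+L}) z * ennreal (norm (f z)) \<partial>dV \<alpha>)) q
           * emeasure \<mu> (Qbox {x..x+L})
     \<le> ennreal (C * (1 / (1+\<alpha>-\<delta>*u) powr (q/u)) * (1 / (1+\<alpha>) powr (q/s - e))) *
       epowr (ennreal (L powr (-\<delta>*p)) * (\<integral>\<^sup>+z. indicator (Qbox {x..x+L}) z *
           ennreal (norm (f z * \<omega> z) powr p * Im z powr (\<delta>*p)) \<partial>dV \<alpha>)) (q/p)"
proof -
  define Q where "Q = Qbox {x..x+L}"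
  define V where "V = L powr (2+\<alpha>) / (1+\<alpha>)"
  have V: "V > 0" using L a by (simp add: V_def)
  have mV: "measure (dV \<alpha>) Q = V" unfolding Q_def V_def by (rule box_measure(2)[OF L a])
  have Qm[measurable]: "Q \<in> sets borel" unfolding Q_def by simp
  define N where "N = (\<integral>\<^sup>+z. indicator Q z * negpow s (\<omega> z) \<partial>dV \<alpha>)"
  define X where "X = (\<integral>\<^sup>+z. indicator Q z * ennreal (norm (f z * \<omega> z) powr p * Im z powr (\<delta>*p)) \<partial>dV \<alpha>)"
  define W where "W = (\<integral>\<^sup>+z. indicator Q z * ennreal (Im z powr (-(\<delta>*u))) \<partial>dV \<alpha>)"
  define I where "I = (\<integral>\<^sup>+z. indicator Q z * ennreal (norm (f z)) \<partial>dV \<alpha>)"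
  define \<mu>Q where "\<mu>Q = emeasure \<mu> Q"
  have W: "W = ennreal (L * (L powr (\<alpha> + - (\<delta>*u) + 1) / (\<alpha> + - (\<delta>*u) + 1)))"
    unfolding W_def Q_def using \<delta>u by (intro box_integral[OF L a]) simp
  have sp: "q/s > 0" using q s by simp
  have c1: "epowr N (q/s) * \<mu>Q \<le> ennreal (C * V powr (q/s - e))"
  proof -
    have cnd': "ennreal (V powr e) * (epowr N (q/s) * ennreal ((1/V) powr (q/s))) * \<mu>Q \<le> ennreal C"
    proof -
      have "N / ennreal V = N * ennreal (1/V)"
        using V by (simp add: divide_ennreal_def inverse_ennreal inverse_eq_divide)
      then have "epowr (N / ennreal V) (q/s) = epowr N (q/s) * ennreal ((1/V) powr (q/s))"
        using sp V by (simp add: epowr_mult epowr_ennreal)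
      then show ?thesis using cnd mV unfolding N_def \<mu>Q_def Q_def by simp
    qed
    have "ennreal (V powr (q/s) * V powr (-e)) * (ennreal (V powr e) * (epowr N (q/s) * ennreal ((1/V) powr (q/s))) * \<mu>Q)
        \<le> ennreal (V powr (q/s) * V powr (-e)) * ennreal C"
      by (rule mult_left_mono[OF cnd']) simp
    moreover have "ennreal (V powr (q/s) * V powr (-e)) * (ennreal (V powr e) * (epowr N (q/s) * ennreal ((1/V) powr (q/s))) * \<mu>Q)
        = ennreal (V powr (q/s) * V powr (-e) * V powr e * (1/V) powr (q/s)) * (epowr N (q/s) * \<mu>Q)"
      by (simp add: ennreal_mult mult_ac)
    moreover have "V powr (q/s) * V powr (-e) * V powr e * (1/V) powr (q/s) = 1"
      using V by (simp add: powr_minus powr_divide field_simps)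
    moreover have "ennreal (V powr (q/s) * V powr (-e)) * ennreal C = ennreal (C * V powr (q/s - e))"
      using V C by (simp add: ennreal_mult[symmetric] powr_diff powr_minus field_simps)
    ultimately show ?thesis by simp
  qed
  show ?thesis
  proof (cases "\<mu>Q = 0")
    case True
    then show ?thesis unfolding \<mu>Q_def Q_def by simp
  next
    case mu0: False
    have Nfin: "N \<noteq> \<infinity>"
    proof
      assume "N = \<infinity>"
      then have "epowr N (q/s) * \<mu>Q = \<infinity>" using mu0 by (simp add: ennreal_top_mult)
      then show False using c1 by (simp add: top_unique)
    qed
    have AEw: "AE z in dV \<alpha>. z \<in> Q \<longrightarrow> \<omega> z > 0"
    proof -
      have "AE z in dV \<alpha>. indicator Q z * negpow s (\<omega> z) \<noteq> \<infinity>"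
        by (rule nn_integral_PInf_AE) (measurable, use Nfin in \<open>simp add: N_def\<close>)
      then show ?thesis
      proof eventually_elim
        case (elim z)
        show ?case
        proof
          assume zQ: "z \<in> Q"
          then have "z \<in> H" using Qbox_sub_H unfolding Q_def by auto
          then have "\<omega> z \<ge> 0" using wnn by auto
          moreover have "\<omega> z \<noteq> 0" using elim zQ by (auto simp: negpow_def)
          ultimately show "\<omega> z > 0" by simp
        qed
      qed
    qed
    define F where "F z = indicator Q z * (norm (f z) * \<bar>\<omega> z\<bar> * Im z powr \<delta>)" for z
    define G where "G z = indicator Q z * inverse (\<omega> z)" for z
    define K where "K z = indicator Q z * Im z powr (-\<delta>)" for z
    have QH: "z \<in> Q \<Longrightarrow> Im z > 0 \<and> \<omega> z \<ge> 0" for z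
      using Qbox_sub_H wnn unfolding Q_def H_def by auto
    have hol: "(\<integral>\<^sup>+z. ennreal (F z * G z * K z) \<partial>dV \<alpha>) \<le>
       epowr (\<integral>\<^sup>+z. ennreal (F z powr p) \<partial>dV \<alpha>) (1/p) * epowr (\<integral>\<^sup>+z. ennreal (G z powr s) \<partial>dV \<alpha>) (1/s)
       * epowr (\<integral>\<^sup>+z. ennreal (K z powr u) \<partial>dV \<alpha>) (1/u)"
      by (rule holder3[OF p s u psu]) (auto simp: F_def G_def K_def dV_def indicator_def dest: QH)
    have eI: "I = (\<integral>\<^sup>+z. ennreal (F z * G z * K z) \<partial>dV \<alpha>)"
      unfolding I_def
    proof (rule nn_integral_cong_AE)
      show "AE z in dV \<alpha>. indicator Q z * ennreal (norm (f z)) = ennreal (F z * G z * K z)"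
        using AEw
      proof eventually_elim
        case (elim z)
        show ?case
        proof (cases "z \<in> Q")
          case True
          then have w: "\<omega> z > 0" and y: "Im z > 0" using elim QH by auto
          have "Im z powr \<delta> * Im z powr (-\<delta>) = 1" using y by (simp add: powr_minus)
          then have "F z * G z * K z = norm (f z)"
            using True w by (simp add: F_def G_def K_def field_simps)
          then show ?thesis using True by simp
        qed (simp add: F_def)
      qed
    qed
    have eX: "(\<integral>\<^sup>+z. ennreal (F z powr p) \<partial>dV \<alpha>) = X"
      unfolding X_def
    proof (rule nn_integral_cong)
      fix z
      show "ennreal (F z powr p) = indicator Q z * ennreal (norm (f z * \<omega> z) powr p * Im z powr (\<delta>*p))"
      proof (cases "z \<in> Q")
        case True
        then have y: "Im z > 0" using QH by auto
        have "F z powr p = (norm (f z) * \<bar>\<omega> z\<bar>) powr p * (Im z powr \<delta>) powr p"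
          using True y by (simp add: F_def powr_mult)
        also have "\<dots> = norm (f z * \<omega> z) powr p * Im z powr (\<delta>*p)"
          by (simp add: norm_mult powr_powr)
        finally show ?thesis using True by simp
      qed (simp add: F_def)
    qed
    have eN: "(\<integral>\<^sup>+z. ennreal (G z powr s) \<partial>dV \<alpha>) \<le> N"
      unfolding N_def
    proof (rule nn_integral_mono)
      fix z
      show "ennreal (G z powr s) \<le> indicator Q z * negpow s (\<omega> z)"
      proof (cases "z \<in> Q \<and> \<omega> z \<noteq> 0")
        case True
        then have w: "\<omega> z > 0" using QH by force
        have "G z powr s = \<omega> z powr (-s)"
          using True w by (simp add: G_def powr_minus inverse_powr)
        then show ?thesis using True by (simp add: negpow_def)
      next
        case False
        then show ?thesis by (auto simp: G_def negpow_def)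
      qed
    qed
    have eW: "(\<integral>\<^sup>+z. ennreal (K z powr u) \<partial>dV \<alpha>) = W"
      unfolding W_def
    proof (rule nn_integral_cong)
      fix z
      show "ennreal (K z powr u) = indicator Q z * ennreal (Im z powr (-(\<delta>*u)))"
      proof (cases "z \<in> Q")
        case True
        then have y: "Im z > 0" using QH by auto
        then show ?thesis using True by (simp add: K_def powr_powr)
      qed (simp add: K_def)
    qed
    have Ib: "I \<le> epowr X (1/p) * epowr N (1/s) * epowr W (1/u)"
    proof -
      have "I \<le> epowr X (1/p) * epowr (\<integral>\<^sup>+z. ennreal (G z powr s) \<partial>dV \<alpha>) (1/s) * epowr W (1/u)"
        using hol eI eX eW by simp
      also have "\<dots> \<le> epowr X (1/p) * epowr N (1/s) * epowr W (1/u)"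
        using s eN by (intro mult_right_mono mult_left_mono epowr_mono) auto
      finally show ?thesis .
    qed
    have Iq: "epowr I q \<le> epowr X (q/p) * epowr N (q/s) * epowr W (q/u)"
    proof -
      have "epowr I q \<le> epowr (epowr X (1/p) * epowr N (1/s) * epowr W (1/u)) q"
        using Ib q by (rule epowr_mono[rotated])
      also have "\<dots> = epowr X (q/p) * epowr N (q/s) * epowr W (q/u)"
        using q p s u by (simp add: epowr_mult epowr_epowr)
      finally show ?thesis .
    qed
    define X' where "X' = ennreal (L powr (-\<delta>*p)) * X"
    have XX': "X = ennreal (L powr (\<delta>*p)) * X'"
      using L by (simp add: X'_def mult.assoc[symmetric] ennreal_mult[symmetric] powr_add[symmetric])
    have eXq: "epowr X (q/p) = ennreal (L powr (\<delta>*q)) * epowr X' (q/p)"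
      using L p q by (simp add: XX' epowr_cmult powr_powr)
    have eWq: "epowr W (q/u) = ennreal ((L * (L powr (\<alpha> + - (\<delta>*u) + 1) / (\<alpha> + - (\<delta>*u) + 1))) powr (q/u))"
      using W \<delta>u L u q by (simp add: epowr_ennreal)
    have "epowr (ennreal (L powr (-\<kappa>)) * I) q * \<mu>Q = ennreal (L powr (-\<kappa>*q)) * epowr I q * \<mu>Q"
      using L q by (simp add: epowr_cmult powr_powr)
    also have "\<dots> \<le> ennreal (L powr (-\<kappa>*q)) * (epowr X (q/p) * epowr N (q/s) * epowr W (q/u)) * \<mu>Q"
      using Iq by (intro mult_right_mono mult_left_mono) auto
    also have "\<dots> = ennreal (L powr (-\<kappa>*q)) * epowr X (q/p) * epowr W (q/u) * (epowr N (q/s) * \<mu>Q)"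
      by (simp add: mult_ac)
    also have "\<dots> \<le> ennreal (L powr (-\<kappa>*q)) * epowr X (q/p) * epowr W (q/u) * ennreal (C * V powr (q/s - e))"
      using c1 by (intro mult_left_mono) auto
    also have "\<dots> = ennreal (L powr (-\<kappa>*q) * L powr (\<delta>*q) * (L * (L powr (\<alpha> + - (\<delta>*u) + 1) / (\<alpha> + - (\<delta>*u) + 1))) powr (q/u)
     * (C * (L powr (2+\<alpha>) / (1+\<alpha>)) powr (q/s - e))) * epowr X' (q/p)"
      unfolding eXq eWq V_def using L C \<delta>u
      by (simp add: ennreal_mult[symmetric] mult_ac)
    also have "L powr (-\<kappa>*q) * L powr (\<delta>*q) * (L * (L powr (\<alpha> + - (\<delta>*u) + 1) / (\<alpha> + - (\<delta>*u) + 1))) powr (q/u)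
     * (C * (L powr (2+\<alpha>) / (1+\<alpha>)) powr (q/s - e)) = C * (1 / (1+\<alpha>-\<delta>*u) powr (q/u)) * (1 / (1+\<alpha>) powr (q/s - e))"
      by (rule const_id[OF L _ \<delta>u ex]) (use a in simp)
    finally show ?thesis unfolding X'_def X_def I_def \<mu>Q_def Q_def by simp
  qed
qed

definition Lg :: "int \<Rightarrow> real" where "Lg n = 2 powr real_of_int n"
definition Jst :: "int \<Rightarrow> int \<Rightarrow> real" where "Jst n m = real_of_int m * (Lg n / 2)"
definition Qj :: "int \<times> int \<Rightarrow> complex set" where
  "Qj j = Qbox {Jst (fst j) (snd j) .. Jst (fst j) (snd j) + Lg (fst j)}"

lemma Lg_pos[simp]: "Lg n > 0" by (simp add: Lg_def)

lemma Qj_sets[measurable]: "Qj j \<in> sets borel"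
  by (simp add: Qj_def)

lemma Qj_iff: "z \<in> Qj (n, m) \<longleftrightarrow> Jst n m \<le> Re z \<and> Re z \<le> Jst n m + Lg n \<and> 0 < Im z \<and> Im z < Lg n"
  unfolding Qj_def using Qbox_Icc[OF Lg_pos[of n]] by auto

lemma cover:
  assumes I: "real_interval I"
  shows "\<exists>n m. Qbox I \<subseteq> Qj (n, m) \<and> Lg n \<le> 4 * ilen I"
proof -
  define l where "l = ilen I"
  have bI: "bdd_below I" "bdd_above I" using I unfolding real_interval_def
    by (auto intro: bounded_imp_bdd_below bounded_imp_bdd_above)
  have l: "l > 0" using I unfolding real_interval_def l_def ilen_def by simp
  define n where "n = \<lceil>log 2 l\<rceil> + 1"
  define h where "h = Lg n / 2"
  have h: "h = 2 powr real_of_int \<lceil>log 2 l\<rceil>"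
    by (simp add: h_def Lg_def n_def powr_add)
  have h1: "l \<le> h"
  proof -
    have "l = 2 powr (log 2 l)" using l by simp
    also have "\<dots> \<le> 2 powr real_of_int \<lceil>log 2 l\<rceil>" by (intro powr_mono) auto
    finally show ?thesis using h by simp
  qed
  have h2: "h < 2 * l"
  proof -
    have "2 powr real_of_int \<lceil>log 2 l\<rceil> < 2 powr (log 2 l + 1)"
      by (intro powr_less_mono) linarith+
    also have "\<dots> = 2 * l" using l by (simp add: powr_add)
    finally show ?thesis using h by simp
  qed
  have hp: "h > 0" using l h1 by simp
  define m where "m = \<lfloor>Inf I / h\<rfloor>"
  have m1: "real_of_int m * h \<le> Inf I"
    using hp by (simp add: m_def) (metis floor_divide_lower)
  have m2: "Inf I < real_of_int m * h + h"
  proof -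
    have "Inf I / h < real_of_int m + 1" by (simp add: m_def)
    then show ?thesis using hp by (simp add: field_simps)
  qed
  have J: "Jst n m = real_of_int m * h" by (simp add: Jst_def h_def)
  have "Qbox I \<subseteq> Qj (n, m)"
  proof
    fix z assume z: "z \<in> Qbox I"
    then have rz: "Re z \<in> I" and iz: "0 < Im z" "Im z < l" by (auto simp: Qbox_def l_def)
    have "Inf I \<le> Re z" using rz bI by (intro cInf_lower)
    moreover have "Re z \<le> Sup I" using rz bI by (intro cSup_upper)
    moreover have "Sup I = Inf I + l" by (simp add: l_def ilen_def)
    ultimately show "z \<in> Qj (n, m)"
      unfolding Qj_iff J using m1 m2 h1 iz by (simp add: h_def)
  qed
  moreover have "Lg n \<le> 4 * ilen I" using h2 by (simp add: h_def l_def)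
  ultimately show ?thesis by blast
qed

lemma geom_int_bound:
  fixes y \<epsilon> :: real
  assumes e: "\<epsilon> > 0" and y: "y > 0"
  shows "(\<integral>\<^sup>+n. ennreal (if y < Lg n then (y / Lg n) powr \<epsilon> else 0) \<partial>count_space UNIV)
     \<le> ennreal (1 / (1 - 2 powr (-\<epsilon>)))"
proof -
  define g where "g n = (if y < Lg n then (y / Lg n) powr \<epsilon> else 0)" for n
  define n0 where "n0 = \<lfloor>log 2 y\<rfloor> + 1"
  define r where "r = (2::real) powr (-\<epsilon>)"
  have r: "0 \<le> r" "r < 1" using e by (auto simp: r_def powr_less_one)
  have g0: "g n = 0" if "n < n0" for n
  proof -
    have "real_of_int n \<le> log 2 y" using that unfolding n0_def by linarith
    then have "Lg n \<le> 2 powr (log 2 y)" unfolding Lg_def by (intro powr_mono) auto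
    then have "Lg n \<le> y" using y by simp
    then show ?thesis by (simp add: g_def)
  qed
  have yn0: "y < 2 powr real_of_int n0"
  proof -
    have "log 2 y < real_of_int n0" unfolding n0_def by linarith
    then have "2 powr (log 2 y) < 2 powr real_of_int n0" by (intro powr_less_mono) auto
    then show ?thesis using y by simp
  qed
  have gk: "g (n0 + int k) \<le> r ^ k" for k
  proof (cases "y < Lg (n0 + int k)")
    case True
    have L: "Lg (n0 + int k) = 2 powr real_of_int n0 * 2 powr real k"
      by (simp add: Lg_def powr_add)
    have "y / Lg (n0 + int k) \<le> 1 / 2 powr real k"
      using yn0 y unfolding L by (simp add: field_simps)
    have "(y / Lg (n0 + int k)) powr \<epsilon> \<le> (1 / 2 powr real k) powr \<epsilon>"
    proof (rule powr_mono2)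
      show "0 \<le> y / Lg (n0 + int k)" using y by (intro divide_nonneg_pos) auto
    qed (use e \<open>y / Lg (n0 + int k) \<le> 1 / 2 powr real k\<close> in auto)
    also have "\<dots> = r ^ k"
      by (simp add: r_def powr_divide powr_powr powr_minus_divide powr_realpow[symmetric] mult.commute)
    finally show ?thesis using True by (simp add: g_def)
  qed (use r in \<open>simp add: g_def\<close>)
  have "(\<integral>\<^sup>+n. ennreal (g n) \<partial>count_space UNIV) = (\<integral>\<^sup>+n. ennreal (g n) * indicator {n0..} n \<partial>count_space UNIV)"
    by (rule nn_integral_cong) (auto simp: indicator_def g0)
  also have "\<dots> = (\<integral>\<^sup>+n. ennreal (g n) \<partial>count_space {n0..})"
    by (simp add: nn_integral_count_space_indicator)
  also have "\<dots> = (\<integral>\<^sup>+k. ennreal (g (n0 + int k)) \<partial>count_space UNIV)"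
  proof -
    have "bij_betw (\<lambda>k::nat. n0 + int k) UNIV {n0..}"
      by (rule bij_betwI[where g="\<lambda>n. nat (n - n0)"]) auto
    then show ?thesis by (rule nn_integral_bij_count_space[symmetric])
  qed
  also have "\<dots> = (\<Sum>k. ennreal (g (n0 + int k)))"
    by (rule nn_integral_count_space_nat)
  also have "\<dots> \<le> (\<Sum>k. ennreal (r ^ k))"
    by (intro suminf_le) (auto intro: gk ennreal_leI)
  also have "\<dots> = ennreal (1 / (1 - r))"
    by (rule suminf_ennreal_eq) (use r in \<open>auto intro: geometric_sums\<close>)
  finally show ?thesis by (simp add: g_def r_def)
qed

lemma sum_bound:
  fixes z :: complex
  assumes e: "\<epsilon> > 0" and y: "Im z > 0"
  shows "(\<integral>\<^sup>+j. ennreal ((Im z / Lg (fst j)) powr \<epsilon>) * indicator (Qj j) z \<partial>count_space UNIV)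
     \<le> ennreal (3 / (1 - 2 powr (-\<epsilon>)))"
proof -
  define g where "g n = (if Im z < Lg n then (Im z / Lg n) powr \<epsilon> else 0)" for n
  have inner: "(\<integral>\<^sup>+m. ennreal ((Im z / Lg n) powr \<epsilon>) * indicator (Qj (n, m)) z \<partial>count_space UNIV)
      \<le> 3 * ennreal (g n)" for n
  proof (cases "Im z < Lg n")
    case False
    then have "\<And>m. z \<notin> Qj (n, m)" by (auto simp: Qj_iff)
    then show ?thesis by simp
  next
    case True
    define h where "h = Lg n / 2"
    have hp: "h > 0" by (simp add: h_def)
    define k where "k = \<lfloor>Re z / h\<rfloor>"
    define S where "S = {m. z \<in> Qj (n, m)}"
    have S: "S \<subseteq> {k - 2, k - 1, k}"
    proof
      fix m assume "m \<in> S"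
      then have m1: "real_of_int m * h \<le> Re z" and m2: "Re z \<le> real_of_int m * h + 2 * h"
        by (auto simp: S_def Qj_iff Jst_def h_def)
      have "real_of_int m \<le> Re z / h" using m1 hp by (simp add: field_simps)
      then have a: "m \<le> k" unfolding k_def by linarith
      have "Re z / h \<le> real_of_int m + 2" using m2 hp by (simp add: field_simps)
      then have b: "k \<le> m + 2" unfolding k_def by linarith
      from a b show "m \<in> {k - 2, k - 1, k}" by auto
    qed
    have eq: "(\<integral>\<^sup>+m. ennreal ((Im z / Lg n) powr \<epsilon>) * indicator (Qj (n, m)) z \<partial>count_space UNIV)
        = ennreal ((Im z / Lg n) powr \<epsilon>) * (\<integral>\<^sup>+m. indicator S m \<partial>count_space UNIV)"
      by (subst nn_integral_cmult[symmetric]) (auto simp: S_def indicator_def intro!: nn_integral_cong)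
    have "(\<integral>\<^sup>+m. indicator S m \<partial>count_space UNIV) = emeasure (count_space UNIV) S"
      by simp
    also have "\<dots> \<le> emeasure (count_space UNIV) {k - 2, k - 1, k}"
      using S by (intro emeasure_mono) auto
    also have "\<dots> \<le> 3"
      by (subst emeasure_count_space_finite) (auto simp: card_insert_if)
    finally have "ennreal ((Im z / Lg n) powr \<epsilon>) * (\<integral>\<^sup>+m. indicator S m \<partial>count_space UNIV) \<le> ennreal ((Im z / Lg n) powr \<epsilon>) * 3"
      by (intro mult_left_mono) auto
    then show ?thesis using True unfolding eq
      by (simp add: g_def mult.commute)
  qed
  have "(\<integral>\<^sup>+j. ennreal ((Im z / Lg (fst j)) powr \<epsilon>) * indicator (Qj j) z \<partial>count_space UNIV)
     = (\<integral>\<^sup>+n. \<integral>\<^sup>+m. ennreal ((Im z / Lg n) powr \<epsilon>) * indicator (Qj (n, m)) z \<partial>count_space UNIV \<partial>count_space UNIV)"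
    by (subst nn_integral_fst_count_space[symmetric]) simp
  also have "\<dots> \<le> (\<integral>\<^sup>+n. 3 * ennreal (g n) \<partial>count_space UNIV)"
    by (intro nn_integral_mono inner)
  also have "\<dots> = 3 * (\<integral>\<^sup>+n. ennreal (g n) \<partial>count_space UNIV)"
    by (simp add: nn_integral_cmult)
  also have "\<dots> \<le> 3 * ennreal (1 / (1 - 2 powr (-\<epsilon>)))"
    using geom_int_bound[OF e y] by (intro mult_left_mono) (auto simp: g_def)
  also have "\<dots> = ennreal (3 * (1 / (1 - 2 powr (-\<epsilon>))))"
  proof -
    have "2 powr (-\<epsilon>) < 1" using e by (simp add: powr_less_one)
    then show ?thesis by (subst ennreal_mult) auto
  qed
  also have "3 * (1 / (1 - 2 powr (-\<epsilon>))) = 3 / (1 - 2 powr (-\<epsilon>))" by simp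
  finally show ?thesis .
qed

lemma count_single_le:
  fixes x :: "'i \<Rightarrow> ennreal"
  shows "x j \<le> (\<integral>\<^sup>+i. x i \<partial>count_space UNIV)"
proof -
  have "(\<integral>\<^sup>+i. x i * indicator {j} i \<partial>count_space UNIV) = x j"
    by (subst nn_integral_indicator_finite) auto
  moreover have "(\<integral>\<^sup>+i. x i * indicator {j} i \<partial>count_space UNIV) \<le> (\<integral>\<^sup>+i. x i \<partial>count_space UNIV)"
    by (intro nn_integral_mono) (auto simp: indicator_def)
  ultimately show ?thesis by simp
qed

lemma sum_pow_le:
  fixes x :: "'i \<Rightarrow> ennreal"
  assumes th: "\<theta> \<ge> 1"
  shows "(\<integral>\<^sup>+j. epowr (x j) \<theta> \<partial>count_space UNIV) \<le> epowr (\<integral>\<^sup>+j. x j \<partial>count_space UNIV) \<theta>"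
proof (cases "(\<integral>\<^sup>+j. x j \<partial>count_space UNIV) = \<infinity>")
  case True
  then show ?thesis by simp
next
  case False
  define S where "S = (\<integral>\<^sup>+j. x j \<partial>count_space UNIV)"
  obtain s where s: "S = ennreal s" "s \<ge> 0" using False unfolding S_def
    by (cases "\<integral>\<^sup>+j. x j \<partial>count_space UNIV") auto
  have pt: "epowr (x j) \<theta> \<le> x j * ennreal (s powr (\<theta> - 1))" for j
  proof -
    have "x j \<le> S" unfolding S_def by (rule count_single_le)
    then obtain t where t: "x j = ennreal t" "t \<ge> 0" "t \<le> s"
      using s by (cases "x j") (auto simp: ennreal_le_iff top_unique)
    have "t powr \<theta> \<le> t * s powr (\<theta> - 1)"
    proof (cases "t = 0")
      case False
      then have "t powr \<theta> = t * t powr (\<theta> - 1)"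
        using t by (simp add: powr_mult_base)
      also have "\<dots> \<le> t * s powr (\<theta> - 1)"
        using t th by (intro mult_left_mono powr_mono2) auto
      finally show ?thesis .
    qed (use th in simp)
    then show ?thesis using t s by (simp add: epowr_ennreal ennreal_mult[symmetric] ennreal_leI)
  qed
  have "(\<integral>\<^sup>+j. epowr (x j) \<theta> \<partial>count_space UNIV) \<le> (\<integral>\<^sup>+j. x j * ennreal (s powr (\<theta> - 1)) \<partial>count_space UNIV)"
    by (intro nn_integral_mono pt)
  also have "\<dots> = S * ennreal (s powr (\<theta> - 1))"
    unfolding S_def by (simp add: nn_integral_multc)
  also have "\<dots> = ennreal (s powr \<theta>)"
  proof (cases "s = 0")
    case False
    then show ?thesis using s by (simp add: ennreal_mult[symmetric] powr_mult_base)
  qed (use s th in simp)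
  also have "\<dots> = epowr S \<theta>" using s by (simp add: epowr_ennreal)
  finally show ?thesis unfolding S_def .
qed

lemma real_interval_Icc: "L > 0 \<Longrightarrow> real_interval {a..a+L}"
  by (simp add: real_interval_def is_interval_cc)

theorem corollary4p9:
  fixes \<alpha> \<gamma> p q r C :: real
    and \<omega> :: "complex \<Rightarrow> real"
    and \<mu> :: "complex measure"
  assumes "\<alpha> > -1" and "0 \<le> \<gamma>" and "\<gamma> < 2 + \<alpha>"
    and "1 < p" and "p \<le> q"
    and w_meas: "\<omega> \<in> borel_measurable borel"
    and w_nonneg: "\<forall>z\<in>H. \<omega> z \<ge> 0"
    and w_loc: "\<forall>K. compact K \<and> K \<subseteq> H \<longrightarrow> set_integrable lborel K \<omega>"
    and mu_sets: "sets \<mu> = sets borel"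
    and "r > 1" and "C > 0"
    and cond: "\<forall>I. real_interval I \<longrightarrow>
        ennreal (measure (dV \<alpha>) (Qbox I) powr (q * (\<gamma> / (2 + \<alpha>) - 1 / p))) *
        epowr ((\<integral>\<^sup>+ z. indicator (Qbox I) z * negpow (p / (p - 1) * r) (\<omega> z) \<partial>dV \<alpha>)
                 / ennreal (measure (dV \<alpha>) (Qbox I)))
              (q / (p / (p - 1) * r)) *
        emeasure \<mu> (Qbox I) \<le> ennreal C"
  shows "\<exists>K > 0. \<forall>f :: complex \<Rightarrow> complex.
           f \<in> borel_measurable borel \<and>
           (\<integral>\<^sup>+ z. ennreal (norm (f z) powr p * \<omega> z) \<partial>dV \<alpha>) < \<infinity> \<longrightarrow>
           epowr (\<integral>\<^sup>+ z. epowr (Mag \<alpha> \<gamma> f z) q \<partial>\<mu>) (1 / q)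
             \<le> ennreal K * epowr (\<integral>\<^sup>+ z. ennreal (norm (f z * \<omega> z) powr p) \<partial>dV \<alpha>) (1 / p)"
proof -
  note a = assms(1) and g0 = assms(2) and g1 = assms(3) and p = assms(4) and pq = assms(5)
    and r = assms(10) and C = assms(11)
  define s where "s = p / (p - 1) * r"
  define u where "u = 1 / (1 - 1/p - 1/s)"
  define \<delta> where "\<delta> = (1 + \<alpha>) / (2 * u)"
  define \<kappa> where "\<kappa> = 2 + \<alpha> - \<gamma>"
  define e where "e = q * (\<gamma> / (2 + \<alpha>) - 1 / p)"
  define \<epsilon> where "\<epsilon> = \<delta> * p"
  have q: "q > 0" using p pq by simp
  have s1: "s > 1"
  proof -
    have "p / (p - 1) > 1" using p by (simp add: field_simps)
    then have "p / (p - 1) * 1 < p / (p - 1) * r" using r by (intro mult_strict_left_mono) auto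
    then show ?thesis using \<open>p / (p - 1) > 1\<close> by (simp add: s_def)
  qed
  have iu: "1 - 1/p - 1/s = (1 - 1/p) * (1 - 1/r)"
    using p r by (simp add: s_def field_simps)
  have iu_pos: "1 - 1/p - 1/s > 0" "1 - 1/p - 1/s < 1"
  proof -
    have "0 < 1 - 1/p" "1 - 1/p < 1" "0 < 1 - 1/r" "1 - 1/r < 1" using p r by auto
    then have "(1 - 1/p) * (1 - 1/r) < (1 - 1/p) * 1" by (intro mult_strict_left_mono) auto
    then have "(1 - 1/p) * (1 - 1/r) < 1 - 1/p" by simp
    moreover have "(1 - 1/p) * (1 - 1/r) > 0" using \<open>0 < 1 - 1/p\<close> \<open>0 < 1 - 1/r\<close> by simp
    ultimately show "1 - 1/p - 1/s > 0" "1 - 1/p - 1/s < 1" unfolding iu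
      using \<open>1 - 1/p < 1\<close> by linarith+
  qed
  have u1: "u > 1" using iu_pos by (simp add: u_def field_simps)
  have psu: "1/p + 1/s + 1/u = 1" by (simp add: u_def)
  have \<delta>: "\<delta> > 0" unfolding \<delta>_def using a u1 by (intro divide_pos_pos) auto
  have \<delta>u': "\<delta> * u = (1 + \<alpha>) / 2" using u1 by (simp add: \<delta>_def field_simps)
  have \<delta>u: "1 + \<alpha> - \<delta> * u > 0" using a \<delta>u' by simp
  have \<kappa>: "\<kappa> > 0" using g1 by (simp add: \<kappa>_def)
  have \<epsilon>: "\<epsilon> > 0" using \<delta> p by (simp add: \<epsilon>_def)
  have ex: "-\<kappa>*q + \<delta>*q + (2+\<alpha>-\<delta>*u)*(q/u) + (2+\<alpha>)*(q/s - e) = 0"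
  proof -
    have e1: "(2+\<alpha>)*e = \<gamma>*q - (2+\<alpha>)*(q/p)" using a by (simp add: e_def field_simps)
    have e2: "(2+\<alpha>-\<delta>*u)*(q/u) = (2+\<alpha>)*(q/u) - \<delta>*q" using u1 by (simp add: field_simps)
    have e3: "q/p + q/s + q/u = q"
    proof -
      have "q/p + q/s + q/u = q * (1/p + 1/s + 1/u)" by (simp add: algebra_simps)
      then show ?thesis using psu by simp
    qed
    have e4: "(2+\<alpha>)*(q/p) + (2+\<alpha>)*(q/s) + (2+\<alpha>)*(q/u) = (2+\<alpha>)*q"
      using e3 by (metis distrib_left)
    show ?thesis unfolding \<kappa>_def right_diff_distrib e2
      using e1 e4 by (simp add: algebra_simps)
  qed
  define C1 where "C1 = C * (1 / (1+\<alpha>-\<delta>*u) powr (q/u)) * (1 / (1+\<alpha>) powr (q/s - e))"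
  define c0 where "c0 = 4 powr \<kappa>"
  define C2 where "C2 = 3 / (1 - 2 powr (-\<epsilon>))"
  have C1: "C1 > 0" using C \<delta>u a by (simp add: C1_def)
  have c0: "c0 > 0" by (simp add: c0_def)
  have C2: "C2 > 0" using \<epsilon> by (simp add: C2_def powr_less_one)
  define K where "K = c0 * C1 powr (1/q) * C2 powr (1/p)"
  have K: "K > 0" using C1 c0 C2 by (simp add: K_def)
  show ?thesis
  proof (intro exI[of _ K] conjI allI impI K)
    fix f :: "complex \<Rightarrow> complex"
    assume "f \<in> borel_measurable borel \<and> (\<integral>\<^sup>+ z. ennreal (norm (f z) powr p * \<omega> z) \<partial>dV \<alpha>) < \<infinity>"
    then have fm[measurable]: "f \<in> borel_measurable borel" by simp
    note wm[measurable] = w_meas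
    define B where "B j = ennreal (Lg (fst j) powr (-\<kappa>)) * (\<integral>\<^sup>+z. indicator (Qj j) z * ennreal (norm (f z)) \<partial>dV \<alpha>)" for j
    define X where "X j = ennreal (Lg (fst j) powr (-\<delta>*p)) * (\<integral>\<^sup>+z. indicator (Qj j) z *
           ennreal (norm (f z * \<omega> z) powr p * Im z powr (\<delta>*p)) \<partial>dV \<alpha>)" for j
    define T where "T z = (\<integral>\<^sup>+j. epowr (B j) q * indicator (Qj j) z \<partial>count_space UNIV)" for z
    define P where "P = (\<integral>\<^sup>+ z. ennreal (norm (f z * \<omega> z) powr p) \<partial>dV \<alpha>)"
    have stepA: "epowr (Mag \<alpha> \<gamma> f z) q \<le> ennreal (c0 powr q) * T z" for z
    proof -
      have "Mag \<alpha> \<gamma> f z \<le> epowr (ennreal (c0 powr q) * T z) (1/q)"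
        unfolding Mag_def
      proof (rule SUP_least)
        fix I assume "I \<in> {I. real_interval I \<and> z \<in> Qbox I}"
        then have I: "real_interval I" and zI: "z \<in> Qbox I" by auto
        obtain n m where sub: "Qbox I \<subseteq> Qj (n, m)" and Ln: "Lg n \<le> 4 * ilen I"
          using cover[OF I] by blast
        have "ilen I powr (-\<kappa>) \<le> (Lg n / 4) powr (-\<kappa>)"
          by (rule powr_mono2') (use Ln \<kappa> in auto)
        then have "ilen I powr (-(2 + \<alpha> - \<gamma>)) \<le> (Lg n / 4) powr (-\<kappa>)"
          by (simp add: \<kappa>_def)
        also have "\<dots> = c0 * Lg n powr (-\<kappa>)"
          by (simp add: c0_def powr_divide powr_minus_divide)
        finally have l1: "ilen I powr (-(2 + \<alpha> - \<gamma>)) \<le> c0 * Lg n powr (-\<kappa>)" .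
        have l2: "(\<integral>\<^sup>+ w. indicator (Qbox I) w * ennreal (norm (f w)) \<partial>dV \<alpha>) \<le>
            (\<integral>\<^sup>+ w. indicator (Qj (n, m)) w * ennreal (norm (f w)) \<partial>dV \<alpha>)"
          using sub by (intro nn_integral_mono) (auto simp: indicator_def)
        have "ennreal (ilen I powr (-(2 + \<alpha> - \<gamma>))) * (\<integral>\<^sup>+ w. indicator (Qbox I) w * ennreal (norm (f w)) \<partial>dV \<alpha>)
            \<le> ennreal (c0 * Lg n powr (-\<kappa>)) * (\<integral>\<^sup>+ w. indicator (Qj (n, m)) w * ennreal (norm (f w)) \<partial>dV \<alpha>)"
          using l1 l2 by (intro mult_mono ennreal_leI) auto
        also have "\<dots> = ennreal c0 * B (n, m)"
          using c0 by (subst ennreal_mult) (auto simp: B_def mult.assoc)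
        finally have t1: "ennreal (ilen I powr (-(2 + \<alpha> - \<gamma>))) * (\<integral>\<^sup>+ w. indicator (Qbox I) w * ennreal (norm (f w)) \<partial>dV \<alpha>)
            \<le> ennreal c0 * B (n, m)" .
        have zQ: "z \<in> Qj (n, m)" using sub zI by auto
        have "epowr (B (n, m)) q = epowr (B (n, m)) q * indicator (Qj (n, m)) z" using zQ by simp
        also have "\<dots> \<le> T z" unfolding T_def
          by (rule count_single_le[where x="\<lambda>j. epowr (B j) q * indicator (Qj j) z"])
        finally have t2: "epowr (B (n, m)) q \<le> T z" .
        have "epowr (ennreal (ilen I powr (-(2 + \<alpha> - \<gamma>))) * (\<integral>\<^sup>+ w. indicator (Qbox I) w * ennreal (norm (f w)) \<partial>dV \<alpha>)) q
            \<le> epowr (ennreal c0 * B (n, m)) q"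
          using t1 q by (intro epowr_mono) auto
        also have "\<dots> = ennreal (c0 powr q) * epowr (B (n, m)) q"
          using q c0 by (simp add: epowr_cmult)
        also have "\<dots> \<le> ennreal (c0 powr q) * T z"
          using t2 by (intro mult_left_mono) auto
        finally show "ennreal (ilen I powr (-(2 + \<alpha> - \<gamma>))) * (\<integral>\<^sup>+ w. indicator (Qbox I) w * ennreal (norm (f w)) \<partial>dV \<alpha>)
            \<le> epowr (ennreal (c0 powr q) * T z) (1/q)"
          using q by (intro epowr_le_imp) auto
      qed
      then have "epowr (Mag \<alpha> \<gamma> f z) q \<le> epowr (epowr (ennreal (c0 powr q) * T z) (1/q)) q"
        using q by (intro epowr_mono) auto
      also have "\<dots> = ennreal (c0 powr q) * T z"
        using q by (simp add: epowr_epowr)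
      finally show ?thesis .
    qed
    have Qjmu[measurable]: "Qj j \<in> sets \<mu>" for j using mu_sets by simp
    have stepC': "epowr (B j) q * emeasure \<mu> (Qj j) \<le> ennreal C1 * epowr (X j) (q/p)" for j
    proof -
      obtain n m where j: "j = (n, m)" by (cases j)
      have cnd: "ennreal (measure (dV \<alpha>) (Qbox {Jst n m..Jst n m + Lg n}) powr e) *
        epowr ((\<integral>\<^sup>+z. indicator (Qbox {Jst n m..Jst n m + Lg n}) z * negpow s (\<omega> z) \<partial>dV \<alpha>)
                 / ennreal (measure (dV \<alpha>) (Qbox {Jst n m..Jst n m + Lg n}))) (q/s) *
        emeasure \<mu> (Qbox {Jst n m..Jst n m + Lg n}) \<le> ennreal C"
        using cond real_interval_Icc[OF Lg_pos[of n], of "Jst n m"] unfolding s_def e_def by blast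
      show ?thesis
        using stepC[OF a p s1 u1 psu \<delta> \<delta>u q Lg_pos[of n] less_imp_le[OF C] w_meas fm w_nonneg ex cnd]
        unfolding j B_def X_def Qj_def C1_def fst_conv snd_conv by assumption
    qed
    have stepE: "(\<integral>\<^sup>+j. X j \<partial>count_space UNIV) \<le> ennreal C2 * P"
    proof -
      have "(\<integral>\<^sup>+j. X j \<partial>count_space UNIV) = (\<integral>\<^sup>+j. \<integral>\<^sup>+z. ennreal (Lg (fst j) powr (-\<delta>*p)) * (indicator (Qj j) z *
           ennreal (norm (f z * \<omega> z) powr p * Im z powr (\<delta>*p))) \<partial>dV \<alpha> \<partial>count_space UNIV)"
        unfolding X_def by (intro nn_integral_cong nn_integral_cmult[symmetric]) measurable
      also have "\<dots> = (\<integral>\<^sup>+z. \<integral>\<^sup>+j. ennreal (Lg (fst j) powr (-\<delta>*p)) * (indicator (Qj j) z *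
           ennreal (norm (f z * \<omega> z) powr p * Im z powr (\<delta>*p))) \<partial>count_space UNIV \<partial>dV \<alpha>)"
        by (rule nn_integral_count_space_nn_integral[symmetric]) auto
      also have "\<dots> \<le> (\<integral>\<^sup>+z. ennreal C2 * ennreal (norm (f z * \<omega> z) powr p) \<partial>dV \<alpha>)"
      proof (intro nn_integral_mono)
        fix z :: complex
        show "(\<integral>\<^sup>+j. ennreal (Lg (fst j) powr (-\<delta>*p)) * (indicator (Qj j) z *
           ennreal (norm (f z * \<omega> z) powr p * Im z powr (\<delta>*p))) \<partial>count_space UNIV)
           \<le> ennreal C2 * ennreal (norm (f z * \<omega> z) powr p)"
        proof (cases "Im z > 0")
          case False
          then have "\<And>j. z \<notin> Qj j" by (auto simp: Qj_def Qbox_def)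
          then show ?thesis by simp
        next
          case True
          have "(\<integral>\<^sup>+j. ennreal (Lg (fst j) powr (-\<delta>*p)) * (indicator (Qj j) z *
             ennreal (norm (f z * \<omega> z) powr p * Im z powr (\<delta>*p))) \<partial>count_space UNIV)
             = (\<integral>\<^sup>+j. ennreal (norm (f z * \<omega> z) powr p) * (ennreal ((Im z / Lg (fst j)) powr \<epsilon>) * indicator (Qj j) z) \<partial>count_space UNIV)"
          proof (intro nn_integral_cong)
            fix j :: "int \<times> int"
            have "(Im z / Lg (fst j)) powr \<epsilon> = Lg (fst j) powr (-\<delta>*p) * Im z powr (\<delta>*p)"
              using True by (simp add: \<epsilon>_def powr_divide powr_minus_divide)
            then show "ennreal (Lg (fst j) powr (-\<delta>*p)) * (indicator (Qj j) z *
               ennreal (norm (f z * \<omega> z) powr p * Im z powr (\<delta>*p)))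
               = ennreal (norm (f z * \<omega> z) powr p) * (ennreal ((Im z / Lg (fst j)) powr \<epsilon>) * indicator (Qj j) z)"
              by (simp add: ennreal_mult[symmetric] mult_ac)
          qed
          also have "\<dots> = ennreal (norm (f z * \<omega> z) powr p) *
             (\<integral>\<^sup>+j. ennreal ((Im z / Lg (fst j)) powr \<epsilon>) * indicator (Qj j) z \<partial>count_space UNIV)"
            by (rule nn_integral_cmult) simp
          also have "\<dots> \<le> ennreal (norm (f z * \<omega> z) powr p) * ennreal C2"
            using sum_bound[OF \<epsilon> True] unfolding C2_def by (intro mult_left_mono) auto
          finally show ?thesis by (simp add: mult.commute)
        qed
      qed
      also have "\<dots> = ennreal C2 * P"
        unfolding P_def by (rule nn_integral_cmult) measurable
      finally show ?thesis .
    qed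
    have qp: "q/p \<ge> 1" using p pq by simp
    define c where "c = ennreal (c0 powr q)"
    have "(\<integral>\<^sup>+ z. epowr (Mag \<alpha> \<gamma> f z) q \<partial>\<mu>) \<le> (\<integral>\<^sup>+ z. c * T z \<partial>\<mu>)"
      unfolding c_def by (intro nn_integral_mono stepA)
    also have "\<dots> = (\<integral>\<^sup>+ z. \<integral>\<^sup>+j. c * (epowr (B j) q * indicator (Qj j) z) \<partial>count_space UNIV \<partial>\<mu>)"
      unfolding T_def by (intro nn_integral_cong nn_integral_cmult[symmetric]) simp
    also have "\<dots> = (\<integral>\<^sup>+j. \<integral>\<^sup>+ z. c * (epowr (B j) q * indicator (Qj j) z) \<partial>\<mu> \<partial>count_space UNIV)"
      by (rule nn_integral_count_space_nn_integral) auto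
    also have "\<dots> = (\<integral>\<^sup>+j. c * (epowr (B j) q * emeasure \<mu> (Qj j)) \<partial>count_space UNIV)"
    proof (intro nn_integral_cong)
      fix j
      have "(\<integral>\<^sup>+ z. c * (epowr (B j) q * indicator (Qj j) z) \<partial>\<mu>) = (\<integral>\<^sup>+ z. (c * epowr (B j) q) * indicator (Qj j) z \<partial>\<mu>)"
        by (simp add: mult.assoc)
      also have "\<dots> = c * epowr (B j) q * emeasure \<mu> (Qj j)"
        by (rule nn_integral_cmult_indicator) simp
      finally show "(\<integral>\<^sup>+ z. c * (epowr (B j) q * indicator (Qj j) z) \<partial>\<mu>) = c * (epowr (B j) q * emeasure \<mu> (Qj j))"
        by (simp add: mult.assoc)
    qed
    also have "\<dots> \<le> (\<integral>\<^sup>+j. c * (ennreal C1 * epowr (X j) (q/p)) \<partial>count_space UNIV)"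
      by (intro nn_integral_mono mult_left_mono stepC') simp
    also have "\<dots> = c * ennreal C1 * (\<integral>\<^sup>+j. epowr (X j) (q/p) \<partial>count_space UNIV)"
      by (subst nn_integral_cmult[symmetric]) (simp_all add: mult.assoc)
    also have "\<dots> \<le> c * ennreal C1 * epowr (\<integral>\<^sup>+j. X j \<partial>count_space UNIV) (q/p)"
      by (intro mult_left_mono sum_pow_le qp) simp
    also have "\<dots> \<le> c * ennreal C1 * epowr (ennreal C2 * P) (q/p)"
      using q p by (intro mult_left_mono epowr_mono stepE) auto
    also have "\<dots> = ennreal (c0 powr q * C1 * C2 powr (q/p)) * epowr P (q/p)"
      using q p C1 C2 c0 by (simp add: c_def epowr_cmult ennreal_mult mult.assoc)
    finally have main: "(\<integral>\<^sup>+ z. epowr (Mag \<alpha> \<gamma> f z) q \<partial>\<mu>) \<le> ennreal (c0 powr q * C1 * C2 powr (q/p)) * epowr P (q/p)" .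
    have "epowr (\<integral>\<^sup>+ z. epowr (Mag \<alpha> \<gamma> f z) q \<partial>\<mu>) (1/q) \<le> epowr (ennreal (c0 powr q * C1 * C2 powr (q/p)) * epowr P (q/p)) (1/q)"
      using q by (intro epowr_mono main) auto
    also have "\<dots> = ennreal ((c0 powr q * C1 * C2 powr (q/p)) powr (1/q)) * epowr P (1/p)"
      using q p C1 C2 c0 by (simp add: epowr_cmult epowr_epowr)
    also have "(c0 powr q * C1 * C2 powr (q/p)) powr (1/q) = K"
      using q p C1 C2 c0 by (simp add: K_def powr_mult powr_powr)
    finally show "epowr (\<integral>\<^sup>+ z. epowr (Mag \<alpha> \<gamma> f z) q \<partial>\<mu>) (1 / q)
             \<le> ennreal K * epowr (\<integral>\<^sup>+ z. ennreal (norm (f z * \<omega> z) powr p) \<partial>dV \<alpha>) (1 / p)"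
      unfolding P_def .
  qed
qed


end
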